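(* Let $\mathfrak R\subseteq\mathcal F(C)\times\mathcal F(C')$ be a simplicial bisimulation between simplicial models $\mathcal C=(C,\chi,\ell)$ and $\mathcal C'=(C',\chi',\ell')$, and let $\mathfrak R_V\subseteq\mathcal V(C)\times\mathcal V(C')$ be the induced vertex relation: $\mathfrak R_V vv'$ iff there are facets $Y,Y'$ with $\mathfrak R YY'$ and a colour $a$ with $v=Y_a$, $v'=Y'_a$. Then $\mathfrak R_V$ is simplex preserving: for every simplex $X\in C$ all of whose vertices lie in the domain of $\mathfrak R_V$, there is a simplex $X'\in C'$ with $\chi'(X')=\chi(X)$ and $\mathfrak R_V X_aX'_a$ for all $a\in\chi(X)$. Likewise the converse relation $\mathfrak R_V^{-1}$ is simplex preserving from $\mathcal C'$ to $\mathcal C$.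
   Context: Fix a finite set $A$ of agents and pairwise disjoint sets $P_a$ ($a\in A$) of local variables, with $P=\bigcup_{a\in A}P_a$. A simplicial complex $C$ on vertex set $\mathcal V(C)$ is a set of nonempty finite subsets (simplices) of $\mathcal V(C)$ closed under nonempty subsets and containing all singletons; maximal simplices are facets, $\mathcal F(C)$. A simplicial model $\mathcal C=(C,\chi,\ell)$ consists of such $C$, a colouring $\chi:\mathcal V(C)\to A$ such that every facet contains exactly one vertex of each colour, and $\ell:\mathcal V(C)\to\mathcal P(P)$ with $\ell(v)\subseteq P_{\chi(v)}$. For a simplex $X$: $\chi(X)=\{\chi(v):v\in X\}$, $\ell(X)=\bigcup_{v\in X}\ell(v)$, and $X_a$ is the vertex of $X$ of colour $a$. Simplicial bisimulation between $\mathcal C$ and $\mathcal C'$: a nonempty $\mathfrak R\subseteq\mathcal F(C)\times\mathcal F(C')$ such that whenever $\mathfrak R YY'$: (atoms) $\ell(Y)=\ell'(Y')$; (forth) for all $a\in A$ and $Z\in\mathcal F(C)$ with $a\in\chi(Y\cap Z)$ there is $Z'\in\mathcal F(C')$ with $a\in\chi'(Y'\cap Z')$ and $\mathfrak R ZZ'$; (back) for all $a$ and $Z'\in\mathcal F(C')$ with $a\in\chi'(Y'\cap Z')$ there is $Z\in\mathcal F(C)$ with $a\in\chi(Y\cap Z)$ and $\mathfrak R ZZ'$. *)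

theory Defs
  imports Main
begin

definition simplicial_complex :: "'v set \<Rightarrow> 'v set set \<Rightarrow> bool" where
  "simplicial_complex V C \<longleftrightarrow>
     (\<forall>X\<in>C. X \<noteq> {} \<and> finite X \<and> X \<subseteq> V) \<and>
     (\<forall>X\<in>C. \<forall>Y. Y \<noteq> {} \<and> Y \<subseteq> X \<longrightarrow> Y \<in> C) \<and>
     (\<forall>v\<in>V. {v} \<in> C)"

definition facets :: "'v set set \<Rightarrow> 'v set set" where
  "facets C = {X \<in> C. \<forall>Y\<in>C. X \<subseteq> Y \<longrightarrow> Y = X}"

definition simplicial_model ::
  "'a set \<Rightarrow> ('a \<Rightarrow> 'p set) \<Rightarrow> 'v set \<Rightarrow> 'v set set \<Rightarrow> ('v \<Rightarrow> 'a) \<Rightarrow> ('v \<Rightarrow> 'p set) \<Rightarrow> bool" where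
  "simplicial_model A P V C chi ell \<longleftrightarrow>
     simplicial_complex V C \<and>
     (\<forall>v\<in>V. chi v \<in> A) \<and>
     (\<forall>X\<in>facets C. \<forall>a\<in>A. \<exists>!v. v \<in> X \<and> chi v = a) \<and>
     (\<forall>v\<in>V. ell v \<subseteq> P (chi v))"

definition vtx :: "('v \<Rightarrow> 'a) \<Rightarrow> 'v set \<Rightarrow> 'a \<Rightarrow> 'v" where
  "vtx chi X a = (THE v. v \<in> X \<and> chi v = a)"

definition lab :: "('v \<Rightarrow> 'p set) \<Rightarrow> 'v set \<Rightarrow> 'p set" where
  "lab ell X = (\<Union>v\<in>X. ell v)"

definition simplicial_bisim ::
  "'a set \<Rightarrow> 'v set set \<Rightarrow> ('v \<Rightarrow> 'a) \<Rightarrow> ('v \<Rightarrow> 'p set) \<Rightarrow>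
   'w set set \<Rightarrow> ('w \<Rightarrow> 'a) \<Rightarrow> ('w \<Rightarrow> 'p set) \<Rightarrow> ('v set \<times> 'w set) set \<Rightarrow> bool" where
  "simplicial_bisim A C chi ell C' chi' ell' R \<longleftrightarrow>
     R \<noteq> {} \<and> R \<subseteq> facets C \<times> facets C' \<and>
     (\<forall>Y Y'. (Y, Y') \<in> R \<longrightarrow>
        lab ell Y = lab ell' Y' \<and>
        (\<forall>a\<in>A. \<forall>Z\<in>facets C. a \<in> chi ` (Y \<inter> Z) \<longrightarrow>
            (\<exists>Z'\<in>facets C'. a \<in> chi' ` (Y' \<inter> Z') \<and> (Z, Z') \<in> R)) \<and>
        (\<forall>a\<in>A. \<forall>Z'\<in>facets C'. a \<in> chi' ` (Y' \<inter> Z') \<longrightarrow>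
            (\<exists>Z\<in>facets C. a \<in> chi ` (Y \<inter> Z) \<and> (Z, Z') \<in> R)))"

definition vertex_rel ::
  "'a set \<Rightarrow> ('v \<Rightarrow> 'a) \<Rightarrow> ('w \<Rightarrow> 'a) \<Rightarrow> ('v set \<times> 'w set) set \<Rightarrow> ('v \<times> 'w) set" where
  "vertex_rel A chi chi' R =
     {(v, v'). \<exists>Y Y' a. (Y, Y') \<in> R \<and> a \<in> A \<and> v = vtx chi Y a \<and> v' = vtx chi' Y' a}"

definition simplex_preserving ::
  "'v set set \<Rightarrow> ('v \<Rightarrow> 'a) \<Rightarrow> 'w set set \<Rightarrow> ('w \<Rightarrow> 'a) \<Rightarrow> ('v \<times> 'w) set \<Rightarrow> bool" where
  "simplex_preserving C chi C' chi' S \<longleftrightarrow>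
     (\<forall>X\<in>C. X \<subseteq> Domain S \<longrightarrow>
        (\<exists>X'\<in>C'. chi' ` X' = chi ` X \<and>
           (\<forall>a\<in>chi ` X. (vtx chi X a, vtx chi' X' a) \<in> S)))"

end

theory Submission
  imports Defs
begin

lemma sm_parts:
  assumes "simplicial_model A P V C chi ell"
  shows "simplicial_complex V C" "\<forall>v\<in>V. chi v \<in> A"
    "\<forall>X\<in>facets C. \<forall>a\<in>A. \<exists>!v. v \<in> X \<and> chi v = a"
  using assms unfolding simplicial_model_def by simp_all

lemma facet_unique:
  assumes "simplicial_model A P V C chi ell" "Y \<in> facets C" "a \<in> A"
  shows "\<exists>!v. v \<in> Y \<and> chi v = a"
  using sm_parts(3)[OF assms(1)] assms(2,3) by (elim ballE) auto

lemma sc_parts: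
  assumes "simplicial_complex V C" "X \<in> C"
  shows "X \<noteq> {}" "X \<subseteq> V" "\<And>Y. Y \<noteq> {} \<Longrightarrow> Y \<subseteq> X \<Longrightarrow> Y \<in> C"
proof -
  have h: "(\<forall>X\<in>C. X \<noteq> {} \<and> finite X \<and> X \<subseteq> V) \<and>
     (\<forall>X\<in>C. \<forall>Y. Y \<noteq> {} \<and> Y \<subseteq> X \<longrightarrow> Y \<in> C) \<and>
     (\<forall>v\<in>V. {v} \<in> C)" using assms(1) unfolding simplicial_complex_def .
  have a: "\<forall>X\<in>C. X \<noteq> {} \<and> finite X \<and> X \<subseteq> V" using h by (rule conjunct1)
  have b: "\<forall>X\<in>C. \<forall>Y. Y \<noteq> {} \<and> Y \<subseteq> X \<longrightarrow> Y \<in> C" using conjunct1[OF conjunct2[OF h]] .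
  show "X \<noteq> {}" "X \<subseteq> V" using a assms(2) by auto
  show "\<And>Y. Y \<noteq> {} \<Longrightarrow> Y \<subseteq> X \<Longrightarrow> Y \<in> C" using b assms(2) by blast
qed

lemma bisim_parts:
  assumes "simplicial_bisim A C chi ell C' chi' ell' R"
  shows "R \<subseteq> facets C \<times> facets C'"
    "\<And>Y Y' a Z. (Y, Y') \<in> R \<Longrightarrow> a \<in> A \<Longrightarrow> Z \<in> facets C \<Longrightarrow> a \<in> chi ` (Y \<inter> Z) \<Longrightarrow>
        \<exists>Z'\<in>facets C'. a \<in> chi' ` (Y' \<inter> Z') \<and> (Z, Z') \<in> R"
proof -
  have a: "R \<subseteq> facets C \<times> facets C'" and b: "\<forall>Y Y'. (Y, Y') \<in> R \<longrightarrow>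
        lab ell Y = lab ell' Y' \<and>
        (\<forall>a\<in>A. \<forall>Z\<in>facets C. a \<in> chi ` (Y \<inter> Z) \<longrightarrow>
            (\<exists>Z'\<in>facets C'. a \<in> chi' ` (Y' \<inter> Z') \<and> (Z, Z') \<in> R)) \<and>
        (\<forall>a\<in>A. \<forall>Z'\<in>facets C'. a \<in> chi' ` (Y' \<inter> Z') \<longrightarrow>
            (\<exists>Z\<in>facets C. a \<in> chi ` (Y \<inter> Z) \<and> (Z, Z') \<in> R))"
    using assms unfolding simplicial_bisim_def by simp_all
  show "R \<subseteq> facets C \<times> facets C'" by (rule a)
  fix Y Y' a Z assume "(Y, Y') \<in> R" "a \<in> A" "Z \<in> facets C" "a \<in> chi ` (Y \<inter> Z)"
  then show "\<exists>Z'\<in>facets C'. a \<in> chi' ` (Y' \<inter> Z') \<and> (Z, Z') \<in> R"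
    using b by blast
qed

lemma facet_vtx:
  assumes "simplicial_model A P V C chi ell" "Y \<in> facets C" "a \<in> A"
  shows "vtx chi Y a \<in> Y \<and> chi (vtx chi Y a) = a"
proof -
  from assms have "\<exists>!v. v \<in> Y \<and> chi v = a" by (rule facet_unique)
  then show ?thesis unfolding vtx_def by (rule theI')
qed

lemma vtx_eq:
  assumes "\<exists>!v. v \<in> Y \<and> chi v = a" "v \<in> Y" "chi v = a"
  shows "vtx chi Y a = v"
  unfolding vtx_def by (rule the1_equality[OF assms(1)]) (use assms in blast)

lemma one_dir:
  assumes sm: "simplicial_model A P V C chi ell"
    and sm': "simplicial_model A P V' C' chi' ell'"
    and cov: "\<forall>X\<in>C. \<exists>Y\<in>facets C. X \<subseteq> Y"
    and bis: "simplicial_bisim A C chi ell C' chi' ell' R"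
  shows "simplex_preserving C chi C' chi' (vertex_rel A chi chi' R)"
  unfolding simplex_preserving_def
proof (intro ballI impI)
  fix X assume XC: "X \<in> C" and XD: "X \<subseteq> Domain (vertex_rel A chi chi' R)"
  have sc: "simplicial_complex V C" by (rule sm_parts(1)[OF sm])
  have sc': "simplicial_complex V' C'" by (rule sm_parts(1)[OF sm'])
  have Xne: "X \<noteq> {}" and XV: "X \<subseteq> V" using sc_parts[OF sc XC] by auto
  obtain Y where Y: "Y \<in> facets C" "X \<subseteq> Y" using cov XC by blast
  obtain v0 where v0: "v0 \<in> X" using Xne by blast
  then obtain w0 where "(v0, w0) \<in> vertex_rel A chi chi' R" using XD by blast
  then obtain Z0 Z0' b where Z0: "(Z0, Z0') \<in> R" "b \<in> A" "v0 = vtx chi Z0 b"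
    unfolding vertex_rel_def by blast
  have RF: "R \<subseteq> facets C \<times> facets C'" by (rule bisim_parts(1)[OF bis])
  have "Z0 \<in> facets C" using Z0 RF by blast
  hence "v0 \<in> Z0 \<and> chi v0 = b" using facet_vtx[OF sm _ Z0(2)] Z0(3) by blast
  hence "b \<in> chi ` (Z0 \<inter> Y)" using v0 Y by blast
  then obtain Y' where Y': "Y' \<in> facets C'" "(Y, Y') \<in> R"
    using bisim_parts(2)[OF bis Z0(1) Z0(2) Y(1)] by blast
  have chiA: "chi ` X \<subseteq> A" using sm_parts(2)[OF sm] XV by blast
  define X' where "X' = (\<lambda>a. vtx chi' Y' a) ` chi ` X"
  have X'Y': "X' \<subseteq> Y'" using facet_vtx[OF sm' Y'(1)] chiA unfolding X'_def by blast
  have "X' \<noteq> {}" using Xne unfolding X'_def by blast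
  moreover have "Y' \<in> C'" using Y'(1) unfolding facets_def by blast
  ultimately have X'C: "X' \<in> C'" using sc_parts(3)[OF sc'] X'Y' by blast
  have chiX': "chi' ` X' = chi ` X"
  proof -
    have h: "\<And>a. a \<in> chi ` X \<Longrightarrow> chi' (vtx chi' Y' a) = a"
      using facet_vtx[OF sm' Y'(1)] chiA by blast
    have "chi' ` X' = (\<lambda>a. chi' (vtx chi' Y' a)) ` chi ` X"
      unfolding X'_def by (rule image_image)
    also have "\<dots> = (\<lambda>a. a) ` chi ` X" by (rule image_cong[OF refl h])
    also have "\<dots> = chi ` X" by (rule image_ident)
    finally show ?thesis .
  qed
  have "\<forall>a\<in>chi ` X. (vtx chi X a, vtx chi' X' a) \<in> vertex_rel A chi chi' R"
  proof
    fix a assume a: "a \<in> chi ` X"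
    then obtain v where v: "v \<in> X" "chi v = a" by blast
    have aA: "a \<in> A" using a chiA by blast
    have uY: "\<exists>!v. v \<in> Y \<and> chi v = a" by (rule facet_unique[OF sm Y(1) aA])
    have vY: "v \<in> Y" using v Y(2) by blast
    have uX: "\<exists>!v. v \<in> X \<and> chi v = a"
    proof (rule ex1I[of _ v])
      show "v \<in> X \<and> chi v = a" using v by blast
    next
      fix w assume "w \<in> X \<and> chi w = a"
      hence "w \<in> Y \<and> chi w = a" using Y(2) by blast
      thus "w = v" using uY vY v(2) by blast
    qed
    have e1: "vtx chi X a = vtx chi Y a" using vtx_eq[OF uX v] vtx_eq[OF uY vY v(2)] by simp
    have uY': "\<exists>!v. v \<in> Y' \<and> chi' v = a" by (rule facet_unique[OF sm' Y'(1) aA])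
    have fa: "vtx chi' Y' a \<in> X' \<and> chi' (vtx chi' Y' a) = a"
      using facet_vtx[OF sm' Y'(1) aA] a unfolding X'_def by blast
    have uX': "\<exists>!v. v \<in> X' \<and> chi' v = a"
    proof (rule ex1I[of _ "vtx chi' Y' a"])
      show "vtx chi' Y' a \<in> X' \<and> chi' (vtx chi' Y' a) = a" using fa .
    next
      fix w assume "w \<in> X' \<and> chi' w = a"
      hence "w \<in> Y' \<and> chi' w = a" using X'Y' by blast
      moreover have "vtx chi' Y' a \<in> Y' \<and> chi' (vtx chi' Y' a) = a" using fa X'Y' by blast
      ultimately show "w = vtx chi' Y' a" using uY' by blast
    qed
    have e2: "vtx chi' X' a = vtx chi' Y' a" using vtx_eq[OF uX' conjunct1[OF fa] conjunct2[OF fa]] .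
    show "(vtx chi X a, vtx chi' X' a) \<in> vertex_rel A chi chi' R"
      unfolding vertex_rel_def e1 e2 using Y'(2) aA by blast
  qed
  thus "\<exists>X'\<in>C'. chi' ` X' = chi ` X \<and>
           (\<forall>a\<in>chi ` X. (vtx chi X a, vtx chi' X' a) \<in> vertex_rel A chi chi' R)"
    using X'C chiX' by blast
qed

lemma bisim_conv:
  assumes "simplicial_bisim A C chi ell C' chi' ell' R"
  shows "simplicial_bisim A C' chi' ell' C chi ell (R\<inverse>)"
proof -
  have n12: "R\<inverse> \<noteq> {}" "R\<inverse> \<subseteq> facets C' \<times> facets C" using assms unfolding simplicial_bisim_def by auto
  moreover have n3: "\<forall>Y' Y. (Y', Y) \<in> R\<inverse> \<longrightarrow>
        lab ell' Y' = lab ell Y \<and>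
        (\<forall>a\<in>A. \<forall>Z'\<in>facets C'. a \<in> chi' ` (Y' \<inter> Z') \<longrightarrow>
            (\<exists>Z\<in>facets C. a \<in> chi ` (Y \<inter> Z) \<and> (Z', Z) \<in> R\<inverse>)) \<and>
        (\<forall>a\<in>A. \<forall>Z\<in>facets C. a \<in> chi ` (Y \<inter> Z) \<longrightarrow>
            (\<exists>Z'\<in>facets C'. a \<in> chi' ` (Y' \<inter> Z') \<and> (Z', Z) \<in> R\<inverse>))"
  proof (intro allI impI)
    fix Y' Y assume "(Y', Y) \<in> R\<inverse>"
    hence YY: "(Y, Y') \<in> R" by simp
    have B: "\<forall>Y Y'. (Y, Y') \<in> R \<longrightarrow>
        lab ell Y = lab ell' Y' \<and>
        (\<forall>a\<in>A. \<forall>Z\<in>facets C. a \<in> chi ` (Y \<inter> Z) \<longrightarrow>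
            (\<exists>Z'\<in>facets C'. a \<in> chi' ` (Y' \<inter> Z') \<and> (Z, Z') \<in> R)) \<and>
        (\<forall>a\<in>A. \<forall>Z'\<in>facets C'. a \<in> chi' ` (Y' \<inter> Z') \<longrightarrow>
            (\<exists>Z\<in>facets C. a \<in> chi ` (Y \<inter> Z) \<and> (Z, Z') \<in> R))"
      using assms unfolding simplicial_bisim_def by blast
    from B[rule_format, OF YY] show "lab ell' Y' = lab ell Y \<and>
        (\<forall>a\<in>A. \<forall>Z'\<in>facets C'. a \<in> chi' ` (Y' \<inter> Z') \<longrightarrow>
            (\<exists>Z\<in>facets C. a \<in> chi ` (Y \<inter> Z) \<and> (Z', Z) \<in> R\<inverse>)) \<and>
        (\<forall>a\<in>A. \<forall>Z\<in>facets C. a \<in> chi ` (Y \<inter> Z) \<longrightarrow>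
            (\<exists>Z'\<in>facets C'. a \<in> chi' ` (Y' \<inter> Z') \<and> (Z', Z) \<in> R\<inverse>))"
      unfolding converse_iff by (elim conjE) (intro conjI; (assumption | (rule sym, assumption)))
  qed
  show ?thesis unfolding simplicial_bisim_def
    by (rule conjI, rule n12(1), rule conjI, rule n12(2), rule n3)
qed

lemma vrel_conv: "vertex_rel A chi' chi (R\<inverse>) = (vertex_rel A chi chi' R)\<inverse>"
  unfolding vertex_rel_def by auto

theorem mainTheorem5:
  fixes A :: "'a set" and P :: "'a \<Rightarrow> 'p set"
    and V :: "'v set" and C :: "'v set set" and chi :: "'v \<Rightarrow> 'a" and ell :: "'v \<Rightarrow> 'p set"
    and V' :: "'w set" and C' :: "'w set set" and chi' :: "'w \<Rightarrow> 'a" and ell' :: "'w \<Rightarrow> 'p set"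
    and R :: "('v set \<times> 'w set) set"
  assumes "finite A"
    and "\<forall>a\<in>A. \<forall>b\<in>A. a \<noteq> b \<longrightarrow> P a \<inter> P b = {}"
    and "simplicial_model A P V C chi ell"
    and "simplicial_model A P V' C' chi' ell'"
    and "\<forall>X\<in>C. \<exists>Y\<in>facets C. X \<subseteq> Y"
    and "\<forall>X'\<in>C'. \<exists>Y'\<in>facets C'. X' \<subseteq> Y'"
    and "simplicial_bisim A C chi ell C' chi' ell' R"
  shows "simplex_preserving C chi C' chi' (vertex_rel A chi chi' R) \<and>
         simplex_preserving C' chi' C chi ((vertex_rel A chi chi' R)\<inverse>)"
  using one_dir[OF assms(3,4,5,7)] one_dir[OF assms(4,3,6) bisim_conv[OF assms(7)]]
  by (simp add: vrel_conv)

end
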